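(* Let $\alpha=(a_1,a_2,\dots,a_w)$ and $\alpha^-=(a_2,\dots,a_w)$. Let $a_i$ with $i\ge2$ lie in $\mathbb{L}^t_\alpha$. Then: (1) if $un^{t-1}_\alpha(a_i)=a_1$, then $RL_{\alpha^-}(a_i)=RL_\alpha(a_i)-1$; (2) if $un^{t-1}_\alpha(a_i)\ne a_1$, then $RL_{\alpha^-}(a_i)=RL_\alpha(a_i)$.
   Context: Sequences consist of real numbers. Items are identified with their original positions, and items of $\alpha^-$ keep their indices from $\alpha$. Increasing subsequences are non-strict: indices strictly increase and values satisfy $\le$. For a sequence $\gamma$, $RL_\gamma(a)$ is the maximum length of an increasing subsequence of $\gamma$ ending at $a$. $\mathbb{L}^t_\gamma$ is the list of items of $\gamma$ with rising length $t$, ordered by position. The up neighbor $un_\alpha(a_i)$ is the item $a_j$ with the largest $j<i$ and $RL_\alpha(a_j)=RL_\alpha(a_i)-1$. Further, $un^0_\alpha(a)=a$ and $un^k_\alpha(a)=un_\alpha(un^{k-1}_\alpha(a))$. *)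

theory Defs
  imports Main "HOL.Real"
begin

text \<open>A sequence is a function a :: nat => real restricted to a finite set S of positions.
  alpha = (a 1, ..., a w) has positions {1..w}; alpha^- has positions {2..w} (items keep
  their original indices).\<close>

definition incr_subseq :: "(nat \<Rightarrow> real) \<Rightarrow> nat set \<Rightarrow> nat list \<Rightarrow> bool" where
  "incr_subseq a S is \<longleftrightarrow> set is \<subseteq> S \<and> sorted_wrt (<) is \<and> sorted_wrt (\<lambda>i j. a i \<le> a j) is"

definition RL :: "(nat \<Rightarrow> real) \<Rightarrow> nat set \<Rightarrow> nat \<Rightarrow> nat" where
  "RL a S i = Max {length is | is. incr_subseq a S is \<and> is \<noteq> [] \<and> last is = i}"

definition un :: "(nat \<Rightarrow> real) \<Rightarrow> nat \<Rightarrow> nat \<Rightarrow> nat" where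
  "un a w i = (GREATEST j. j \<in> {1..w} \<and> j < i \<and> RL a {1..w} j + 1 = RL a {1..w} i)"

end

theory Submission
  imports Defs
begin

lemma last_rel: "sorted_wrt R xs \<Longrightarrow> x \<in> set xs \<Longrightarrow> x = last xs \<or> R x (last xs)"
proof (induction xs)
  case Nil then show ?case by simp
next
  case (Cons y ys)
  show ?case
  proof (cases "ys = []")
    case True then show ?thesis using Cons by simp
  next
    case False
    then have "last ys \<in> set ys" by simp
    then show ?thesis using Cons False by auto
  qed
qed

lemma RL_fin:
  assumes "finite S"
  shows "finite {length xs | xs. incr_subseq a S xs \<and> xs \<noteq> [] \<and> last xs = i}"
proof (rule finite_subset[of _ "{..card S}"])
  show "{length xs | xs. incr_subseq a S xs \<and> xs \<noteq> [] \<and> last xs = i} \<subseteq> {..card S}"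
  proof
    fix n assume "n \<in> {length xs | xs. incr_subseq a S xs \<and> xs \<noteq> [] \<and> last xs = i}"
    then obtain xs where n: "n = length xs" and h: "incr_subseq a S xs" by blast
    then have "distinct xs" "set xs \<subseteq> S" unfolding incr_subseq_def
      using strict_sorted_iff by auto
    then have "length xs \<le> card S" using distinct_card card_mono[OF assms] by metis
    then show "n \<in> {..card S}" using n by simp
  qed
qed simp

lemma RL_ge:
  assumes "finite S" "incr_subseq a S xs" "xs \<noteq> []" "last xs = i"
  shows "length xs \<le> RL a S i"
  unfolding RL_def using assms RL_fin[OF assms(1)] by (intro Max_ge) auto

lemma RL_ex:
  assumes "finite S" "i \<in> S"
  shows "\<exists>xs. incr_subseq a S xs \<and> xs \<noteq> [] \<and> last xs = i \<and> length xs = RL a S i"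
proof -
  have "incr_subseq a S [i]" using assms by (simp add: incr_subseq_def)
  then have ne: "{length xs | xs. incr_subseq a S xs \<and> xs \<noteq> [] \<and> last xs = i} \<noteq> {}"
    by force
  have "RL a S i \<in> {length xs | xs. incr_subseq a S xs \<and> xs \<noteq> [] \<and> last xs = i}"
    unfolding RL_def using Max_in[OF RL_fin[OF assms(1)] ne] .
  then show ?thesis by auto
qed

lemma RL_pos:
  assumes "finite S" "i \<in> S" shows "1 \<le> RL a S i"
  using RL_ge[OF assms(1), of a "[i]" i] assms by (simp add: incr_subseq_def)

lemma RL_A:
  assumes "finite S" "j \<in> S" "i \<in> S" "j < i" "a j \<le> a i"
  shows "RL a S j + 1 \<le> RL a S i"
proof -
  obtain xs where xs: "incr_subseq a S xs" "xs \<noteq> []" "last xs = j" "length xs = RL a S j"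
    using RL_ex[OF assms(1,2)] by blast
  have "\<forall>x\<in>set xs. x < i \<and> a x \<le> a i"
  proof
    fix x assume x: "x \<in> set xs"
    have "x = j \<or> x < j" using last_rel[of "(<)" xs x] xs x unfolding incr_subseq_def by auto
    moreover have "x = j \<or> a x \<le> a j"
      using last_rel[of "\<lambda>i j. a i \<le> a j" xs x] xs x unfolding incr_subseq_def by auto
    ultimately show "x < i \<and> a x \<le> a i" using assms by auto
  qed
  then have "incr_subseq a S (xs @ [i])" using xs assms
    unfolding incr_subseq_def by (auto simp: sorted_wrt_append)
  from RL_ge[OF assms(1) this] xs show ?thesis by simp
qed

lemma RL_B:
  assumes "finite S" "i \<in> S" "2 \<le> RL a S i"
  shows "\<exists>j\<in>S. j < i \<and> a j \<le> a i \<and> RL a S j + 1 = RL a S i"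
proof -
  obtain xs where xs: "incr_subseq a S xs" "xs \<noteq> []" "last xs = i" "length xs = RL a S i"
    using RL_ex[OF assms(1,2)] by blast
  define bs where "bs = butlast xs"
  have eq: "xs = bs @ [i]" using xs bs_def append_butlast_last_id[of xs] by simp
  have bsne: "bs \<noteq> []" using xs assms(3) bs_def by (cases xs rule: rev_cases) auto
  define j where "j = last bs"
  have jin: "j \<in> set bs" using bsne j_def by simp
  have bsi: "incr_subseq a S bs" using xs(1) eq unfolding incr_subseq_def
    by (auto simp: sorted_wrt_append)
  have rel: "j < i" "a j \<le> a i" "j \<in> S" using xs(1) eq jin unfolding incr_subseq_def
    by (auto simp: sorted_wrt_append)
  have "length bs \<le> RL a S j" using RL_ge[OF assms(1) bsi bsne] j_def by simp
  moreover have "length bs + 1 = RL a S i" using xs(4) eq by simp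
  moreover have "RL a S j + 1 \<le> RL a S i" using RL_A[OF assms(1) rel(3) assms(2) rel(1,2)] .
  ultimately show ?thesis using rel by (intro bexI[of _ j]) auto
qed

lemma RL_C:
  assumes "finite S" "j \<in> S" "k \<in> S" "j < k" "RL a S j = RL a S k"
  shows "a k < a j"
  using RL_A[of S j k a] assms by force

lemma RL_mono:
  assumes "finite S" "S' \<subseteq> S" "i \<in> S'"
  shows "RL a S' i \<le> RL a S i"
proof -
  obtain xs where xs: "incr_subseq a S' xs" "xs \<noteq> []" "last xs = i" "length xs = RL a S' i"
    using RL_ex[OF finite_subset[OF assms(2,1)] assms(3)] by blast
  then have "incr_subseq a S xs" using assms(2) unfolding incr_subseq_def by auto
  from RL_ge[OF assms(1) this xs(2,3)] xs(4) show ?thesis by simp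
qed

lemma RL_drop1:
  assumes "i \<in> {2..w}"
  shows "RL a {1..w} i \<le> RL a {2..w} i + 1"
proof -
  obtain xs where xs: "incr_subseq a {1..w} xs" "xs \<noteq> []" "last xs = i" "length xs = RL a {1..w} i"
    using RL_ex[of "{1..w}" i a] assms by auto
  obtain x rest where xr: "xs = x # rest" using xs(2) by (cases xs) auto
  show ?thesis
  proof (cases "rest = []")
    case True then show ?thesis using xs xr by simp
  next
    case False
    have lr: "last rest = i" using xs(3) xr False by simp
    have gt: "\<forall>y\<in>set rest. x < y" "x \<in> {1..w}" using xs(1) xr unfolding incr_subseq_def by auto
    show ?thesis
    proof (cases "x = 1")
      case True
      have "incr_subseq a {2..w} rest" using xs(1) xr gt True unfolding incr_subseq_def
        by fastforce
      from RL_ge[OF _ this False lr] xs(4) xr show ?thesis by simp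
    next
      case F: False
      have "incr_subseq a {2..w} xs" using xs(1) xr gt F unfolding incr_subseq_def
        by fastforce
      from RL_ge[OF _ this xs(2,3)] xs(4) show ?thesis by simp
    qed
  qed
qed

lemma un_prop:
  assumes "i \<in> {1..w}" "2 \<le> RL a {1..w} i"
  shows "un a w i \<in> {1..w}" "un a w i < i" "RL a {1..w} (un a w i) + 1 = RL a {1..w} i"
    "a (un a w i) \<le> a i"
    "\<And>k. k \<in> {1..w} \<Longrightarrow> k < i \<Longrightarrow> RL a {1..w} k + 1 = RL a {1..w} i \<Longrightarrow> k \<le> un a w i"
proof -
  let ?P = "\<lambda>j. j \<in> {1..w} \<and> j < i \<and> RL a {1..w} j + 1 = RL a {1..w} i"
  obtain j' where j': "j' \<in> {1..w}" "j' < i" "a j' \<le> a i" "RL a {1..w} j' + 1 = RL a {1..w} i"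
    using RL_B[of "{1..w}" i a] assms by auto
  have P': "?P j'" using j' by simp
  have bd: "\<And>y. ?P y \<Longrightarrow> y \<le> i" by simp
  have PG: "?P (un a w i)" unfolding un_def using GreatestI_nat[of ?P, OF P' bd] .
  have le: "\<And>k. ?P k \<Longrightarrow> k \<le> un a w i" unfolding un_def using Greatest_le_nat[of ?P _ i] bd by blast
  show "un a w i \<in> {1..w}" "un a w i < i" "RL a {1..w} (un a w i) + 1 = RL a {1..w} i"
    using PG by auto
  show "\<And>k. k \<in> {1..w} \<Longrightarrow> k < i \<Longrightarrow> RL a {1..w} k + 1 = RL a {1..w} i \<Longrightarrow> k \<le> un a w i"
    using le by blast
  have "j' \<le> un a w i" using le[OF P'] .
  then show "a (un a w i) \<le> a i"
  proof (cases "j' = un a w i")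
    case False
    then have "j' < un a w i" using \<open>j' \<le> un a w i\<close> by simp
    then have "a (un a w i) < a j'" using RL_C[of "{1..w}" j' "un a w i" a] j' PG by auto
    then show ?thesis using j' by simp
  qed (use j' in simp)
qed

lemma chain:
  assumes "i \<in> {1..w}" "RL a {1..w} i = t"
  shows "k \<le> t - 1 \<Longrightarrow> (un a w ^^ k) i \<in> {1..w} \<and> RL a {1..w} ((un a w ^^ k) i) + k = t"
proof (induction k)
  case 0 then show ?case using assms by simp
next
  case (Suc k)
  then have h: "(un a w ^^ k) i \<in> {1..w}" "RL a {1..w} ((un a w ^^ k) i) + k = t" by auto
  then have "2 \<le> RL a {1..w} ((un a w ^^ k) i)" using Suc.prems by linarith
  from un_prop[OF h(1) this] h Suc.prems show ?case by simp
qed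

lemma chain_step:
  assumes "i \<in> {1..w}" "RL a {1..w} i = t" "k < t - 1"
  shows "(un a w ^^ Suc k) i = un a w ((un a w ^^ k) i)"
    "(un a w ^^ Suc k) i < (un a w ^^ k) i"
    "a ((un a w ^^ Suc k) i) \<le> a ((un a w ^^ k) i)"
    "\<And>q. q \<in> {1..w} \<Longrightarrow> q < (un a w ^^ k) i \<Longrightarrow> RL a {1..w} q + 1 = RL a {1..w} ((un a w ^^ k) i)
        \<Longrightarrow> q \<le> (un a w ^^ Suc k) i"
proof -
  have h: "(un a w ^^ k) i \<in> {1..w}" "RL a {1..w} ((un a w ^^ k) i) + k = t"
    using chain[OF assms(1,2), of k] assms(3) by auto
  then have "2 \<le> RL a {1..w} ((un a w ^^ k) i)" using assms(3) by linarith
  note u = un_prop[OF h(1) this]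
  show "(un a w ^^ Suc k) i = un a w ((un a w ^^ k) i)" by simp
  show "(un a w ^^ Suc k) i < (un a w ^^ k) i"
    "a ((un a w ^^ Suc k) i) \<le> a ((un a w ^^ k) i)" using u by auto
  show "\<And>q. q \<in> {1..w} \<Longrightarrow> q < (un a w ^^ k) i \<Longrightarrow> RL a {1..w} q + 1 = RL a {1..w} ((un a w ^^ k) i)
        \<Longrightarrow> q \<le> (un a w ^^ Suc k) i" using u(5) by simp
qed

theorem theorem3:
  fixes a :: "nat \<Rightarrow> real" and w i t :: nat
  assumes "2 \<le> i" and "i \<le> w"
    and "RL a {1..w} i = t"
  shows "((un a w ^^ (t - 1)) i = 1 \<longrightarrow> RL a {2..w} i = RL a {1..w} i - 1)
       \<and> ((un a w ^^ (t - 1)) i \<noteq> 1 \<longrightarrow> RL a {2..w} i = RL a {1..w} i)"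
proof -
  define c where "c k = (un a w ^^ k) i" for k
  have iS: "i \<in> {1..w}" "i \<in> {2..w}" using assms by auto
  have t1: "1 \<le> t" using RL_pos[of "{1..w}" i a] iS assms(3) by simp
  have ub: "RL a {2..w} i \<le> t" using RL_mono[of "{1..w}" "{2..w}" i a] iS assms(3) by auto
  have lb: "t \<le> RL a {2..w} i + 1" using RL_drop1[OF iS(2), of a] assms(3) by simp
  have ch: "\<And>k. k \<le> t - 1 \<Longrightarrow> c k \<in> {1..w} \<and> RL a {1..w} (c k) + k = t"
    unfolding c_def using chain[OF iS(1) assms(3)] by blast
  have st: "\<And>k. k < t - 1 \<Longrightarrow> c (Suc k) < c k \<and> a (c (Suc k)) \<le> a (c k)"
    unfolding c_def using chain_step[OF iS(1) assms(3)] by blast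
  have mx: "\<And>k q. k < t - 1 \<Longrightarrow> q \<in> {1..w} \<Longrightarrow> q < c k \<Longrightarrow> RL a {1..w} q + 1 = RL a {1..w} (c k)
        \<Longrightarrow> q \<le> c (Suc k)"
    unfolding c_def using chain_step(4)[OF iS(1) assms(3)] by blast
  have part1: "RL a {2..w} i = t - 1" if c1: "c (t - 1) = 1"
  proof -
    have E: "\<forall>k. k \<le> t - 1 \<longrightarrow> p \<le> c k \<longrightarrow> RL a {1..w} p = t - k \<longrightarrow> RL a {2..w} p \<le> t - k - 1"
      if "p \<in> {2..w}" for p
      using that
    proof (induction p rule: less_induct)
      case (less p)
      show ?case
      proof (intro allI impI)
        fix k assume k: "k \<le> t - 1" "p \<le> c k" "RL a {1..w} p = t - k"
        show "RL a {2..w} p \<le> t - k - 1"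
        proof (rule ccontr)
          assume nc: "\<not> RL a {2..w} p \<le> t - k - 1"
          have "RL a {2..w} p \<le> RL a {1..w} p" using RL_mono[of "{1..w}" "{2..w}" p a] less.prems by auto
          then have eqL: "RL a {2..w} p = t - k" using nc k by linarith
          show False
          proof (cases "k = t - 1")
            case True
            then show False using k c1 less.prems by auto
          next
            case False
            then have "2 \<le> RL a {2..w} p" using eqL k by linarith
            then obtain q where q: "q \<in> {2..w}" "q < p" "a q \<le> a p" "RL a {2..w} q + 1 = RL a {2..w} p"
              using RL_B[of "{2..w}" p a] less.prems by auto
            have "RL a {2..w} q \<le> RL a {1..w} q" using RL_mono[of "{1..w}" "{2..w}" q a] q by auto
            moreover have "RL a {1..w} q + 1 \<le> RL a {1..w} p"
              using RL_A[of "{1..w}" q p a] q less.prems by auto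
            ultimately have Rq: "RL a {1..w} q + 1 = RL a {1..w} (c k)"
              using q(4) eqL k ch[of k] by linarith
            have kl: "k < t - 1" using False k by simp
            have "q \<le> c (Suc k)" using mx[OF kl _ _ Rq] q k by auto
            moreover have "RL a {1..w} q = t - Suc k" using Rq ch[of k] k by linarith
            ultimately have "RL a {2..w} q \<le> t - Suc k - 1"
              using less.IH[OF q(2) q(1)] kl by auto
            then show False using q(4) eqL kl by linarith
          qed
        qed
      qed
    qed
    have "RL a {2..w} i \<le> t - 1" using E[OF iS(2)] assms(3) c_def by auto
    then show ?thesis using lb by linarith
  qed
  have part2: "RL a {2..w} i = t" if c1: "c (t - 1) \<noteq> 1"
  proof -
    have "m \<le> t - 1 \<longrightarrow> c (t - 1 - m) \<in> {2..w} \<and> m + 1 \<le> RL a {2..w} (c (t - 1 - m))" for m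
    proof (induction m)
      case 0
      have "c (t - 1) \<in> {2..w}" using ch[of "t - 1"] c1 by auto
      then show ?case using RL_pos[of "{2..w}" "c (t - 1)" a] by auto
    next
      case (Suc m)
      show ?case
      proof
        assume m: "Suc m \<le> t - 1"
        define k where "k = t - 1 - Suc m"
        have kk: "Suc k = t - 1 - m" "k < t - 1" using m k_def by auto
        have IH: "c (Suc k) \<in> {2..w}" "m + 1 \<le> RL a {2..w} (c (Suc k))" using Suc.IH m kk by auto
        have s: "c (Suc k) < c k" "a (c (Suc k)) \<le> a (c k)" using st[OF kk(2)] by auto
        have "c k \<in> {2..w}" using ch[of k] IH(1) s(1) kk by auto
        moreover have "RL a {2..w} (c (Suc k)) + 1 \<le> RL a {2..w} (c k)"
          using RL_A[of "{2..w}" "c (Suc k)" "c k" a] IH(1) s calculation by auto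
        ultimately show "c (t - 1 - Suc m) \<in> {2..w} \<and> Suc m + 1 \<le> RL a {2..w} (c (t - 1 - Suc m))"
          using IH k_def by auto
      qed
    qed
    from this[of "t - 1"] have "t \<le> RL a {2..w} i" using t1 c_def by auto
    then show ?thesis using ub by simp
  qed
  show ?thesis using part1 part2 assms(3) unfolding c_def by auto
qed

end
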